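(* There exists a unique $\tau_c\in(\tau_1^i,+\infty)$ such that $$p'(\tau_1^i)=\frac{2h(\tau_c)-2h(\tau_1^i)}{\tau_c^2-(\tau_1^i)^2}<p'(\tau_c).$$ Moreover, $\tau_c>\tau_2^a$ and $$p'(\tau_1^i)>\frac{2h(\tau)-2h(\tau_1^i)}{\tau^2-(\tau_1^i)^2}\quad\text{for all }\tau\in(\tau_1^i,\tau_c).$$
   Context: The pressure is $p(\tau)=\frac{\mathcal S}{(\tau-1)^\gamma}-\frac{1}{\tau^2}$ for $\tau>1$, with constants $1<\gamma<2$ and $\mathcal S>0$, assumed such that there exist $1<\tau_1^i<\tau_2^i$ with $p'(\tau)<0$ for $\tau>1$, $p''>0$ on $(1,\tau_1^i)\cup(\tau_2^i,+\infty)$, and $p''<0$ on $(\tau_1^i,\tau_2^i)$. The function $h$ (specific enthalpy) satisfies $h'(\tau)=\tau p'(\tau)$. $\tau_2^a>\tau_2^i$ denotes the point with $p'(\tau_2^a)=p'(\tau_1^i)$. *)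

theory Defs
  imports "HOL-Analysis.Analysis"
begin

definition pres :: "real \<Rightarrow> real \<Rightarrow> real \<Rightarrow> real" where
  "pres S \<gamma> \<tau> = S / (\<tau> - 1) powr \<gamma> - 1 / \<tau>\<^sup>2"

end

theory Submission
  imports Defs
begin

lemma pres_eq: "1 < x \<Longrightarrow> pres S g x = S * (x-1) powr (-g) - x powr (-2)"
  by (simp add: pres_def powr_minus divide_inverse powr_realpow)

lemma pres_d1:
  assumes "1 < t"
  shows "((\<lambda>x. S * (x-1) powr (-g) - x powr (-2)) has_real_derivative (- S * g * (t-1) powr (-g-1) + 2 * t powr (-3))) (at t)"
    apply (rule DERIV_cong)
    apply (rule derivative_eq_intros refl | use assms in linarith)+
    using assms apply (simp add: powr_diff powr_minus field_simps)
    done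

lemma pres_d2:
  assumes "1 < t"
  shows "((\<lambda>x. - S * g * (x-1) powr (-g-1) + 2 * x powr (-3)) has_real_derivative (S * g * (g+1) * (t-1) powr (-g-2) - 6 * t powr (-4))) (at t)"
    apply (rule DERIV_cong)
    apply (rule derivative_eq_intros refl | use assms in linarith)+
    using assms apply (simp add: powr_diff powr_minus field_simps)
    done

lemma pres_q_eq:
  assumes "1 < t"
  shows "deriv (pres S g) t = - S * g * (t-1) powr (-g-1) + 2 * t powr (-3)"
proof -
  have "(pres S g has_real_derivative (- S * g * (t-1) powr (-g-1) + 2 * t powr (-3))) (at t)"
    by (rule has_field_derivative_transform_within_open[OF pres_d1[OF assms], of "{1<..}"])
       (use assms in \<open>auto simp: pres_eq\<close>)
  then show ?thesis by (rule DERIV_imp_deriv)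
qed

lemma pres_qD:
  assumes "1 < t"
  shows "(deriv (pres S g) has_real_derivative deriv (deriv (pres S g)) t) (at t)"
proof -
  have "(deriv (pres S g) has_real_derivative (S * g * (g+1) * (t-1) powr (-g-2) - 6 * t powr (-4))) (at t)"
    by (rule has_field_derivative_transform_within_open[OF pres_d2[OF assms], of "{1<..}"])
       (use assms in \<open>auto simp: pres_q_eq\<close>)
  then show ?thesis using DERIV_imp_deriv by metis
qed

lemma main_abs:
  fixes q q' h :: "real \<Rightarrow> real" and t1 t2 t2a :: real
  assumes t12: "1 < t1" "t1 < t2" "t2 < t2a"
    and qa: "q t2a = q t1"
    and qD: "\<And>t. 1 < t \<Longrightarrow> (q has_real_derivative q' t) (at t)"
    and q'neg: "\<And>t. t1 < t \<Longrightarrow> t < t2 \<Longrightarrow> q' t < 0"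
    and q'pos: "\<And>t. t2 < t \<Longrightarrow> q' t > 0"
    and hD: "\<And>t. 1 < t \<Longrightarrow> (h has_real_derivative t * q t) (at t)"
  shows "(\<exists>!tc. t1 < tc \<and>
            q t1 = (2 * h tc - 2 * h t1) / (tc\<^sup>2 - t1\<^sup>2) \<and>
            (2 * h tc - 2 * h t1) / (tc\<^sup>2 - t1\<^sup>2) < q tc)
       \<and> (\<forall>tc. t1 < tc \<and>
            q t1 = (2 * h tc - 2 * h t1) / (tc\<^sup>2 - t1\<^sup>2) \<and>
            (2 * h tc - 2 * h t1) / (tc\<^sup>2 - t1\<^sup>2) < q tc
          \<longrightarrow> t2a < tc \<and>
              (\<forall>t. t1 < t \<and> t < tc \<longrightarrow>
                 q t1 > (2 * h t - 2 * h t1) / (t\<^sup>2 - t1\<^sup>2)))"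
proof -
  define A where "A = q t1"
  define G where "G t = 2 * h t - 2 * h t1 - A * (t\<^sup>2 - t1\<^sup>2)" for t
  have qcont: "continuous_on {a..b} q" if "1 < a" for a b
    by (rule DERIV_atLeastAtMost_imp_continuous_on) (metis qD that less_le_trans)
  have dec: "q b < q a" if "t1 \<le> a" "a < b" "b \<le> t2" for a b
  proof (rule DERIV_neg_imp_decreasing_open[OF \<open>a < b\<close>])
    fix x assume x: "a < x" "x < b"
    then have "1 < x" "t1 < x" "x < t2" using that t12 by linarith+
    then show "\<exists>y. (q has_real_derivative y) (at x) \<and> y < 0"
      using qD q'neg by blast
  next
    show "continuous_on {a..b} q" by (rule qcont) (use that t12 in linarith)
  qed
  have inc: "q a < q b" if "t2 \<le> a" "a < b" for a b
  proof (rule DERIV_pos_imp_increasing_open[OF \<open>a < b\<close>])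
    fix x assume x: "a < x" "x < b"
    then have "1 < x" "t2 < x" using that t12 by linarith+
    then show "\<exists>y. (q has_real_derivative y) (at x) \<and> y > 0"
      using qD q'pos by blast
  next
    show "continuous_on {a..b} q" by (rule qcont) (use that t12 in linarith)
  qed
  have L1: "q t < A" if "t1 < t" "t < t2a" for t
  proof (cases "t \<le> t2")
    case True then show ?thesis using dec[of t1 t] that by (simp add: A_def)
  next
    case False then show ?thesis using inc[of t t2a] that qa by (simp add: A_def)
  qed
  have L2: "A < q t" if "t2a < t" for t
    using inc[of t2a t] that t12 qa by (simp add: A_def)
  have GD: "(G has_real_derivative 2 * t * (q t - A)) (at t)" if "1 < t" for t
    unfolding G_def[abs_def]
    apply (rule DERIV_cong)
    apply (rule derivative_eq_intros refl hD that)+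
    apply (simp add: algebra_simps)
    done
  have Gcont: "continuous_on {a..b} G" if "1 < a" for a b
    by (rule DERIV_atLeastAtMost_imp_continuous_on) (metis GD that less_le_trans)
  have Gdec: "G b < G a" if "t1 \<le> a" "a < b" "b \<le> t2a" for a b
  proof (rule DERIV_neg_imp_decreasing_open[OF \<open>a < b\<close>])
    fix x assume x: "a < x" "x < b"
    have "2 * x * (q x - A) < 0" using L1[of x] x that t12
      by (simp add: mult_pos_neg)
    then show "\<exists>y. (G has_real_derivative y) (at x) \<and> y < 0"
      using GD[of x] x that t12 by auto
  next
    show "continuous_on {a..b} G" by (rule Gcont) (use that t12 in linarith)
  qed
  have Ginc: "G a < G b" if "t2a \<le> a" "a < b" for a b
  proof (rule DERIV_pos_imp_increasing_open[OF \<open>a < b\<close>])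
    fix x assume x: "a < x" "x < b"
    have "2 * x * (q x - A) > 0" using L2[of x] x that t12
      by simp
    then show "\<exists>y. (G has_real_derivative y) (at x) \<and> y > 0"
      using GD[of x] x that t12 by auto
  next
    show "continuous_on {a..b} G" by (rule Gcont) (use that t12 in linarith)
  qed
  have G0: "G t1 = 0" by (simp add: G_def)
  have Gneg: "G t < 0" if "t1 < t" "t \<le> t2a" for t
    using Gdec[of t1 t] that G0 by simp
  have Feq: "(A = (2 * h t - 2 * h t1) / (t\<^sup>2 - t1\<^sup>2)) \<longleftrightarrow> G t = 0" if "t1 < t" for t
  proof -
    have d: "t\<^sup>2 - t1\<^sup>2 > 0" using that t12
      by (simp add: power_strict_mono)
    show ?thesis using d by (auto simp: G_def field_simps)
  qed
  have Flt: "(A > (2 * h t - 2 * h t1) / (t\<^sup>2 - t1\<^sup>2)) \<longleftrightarrow> G t < 0" if "t1 < t" for t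
  proof -
    have d: "t\<^sup>2 - t1\<^sup>2 > 0" using that t12
      by (simp add: power_strict_mono)
    show ?thesis using d by (simp add: G_def field_simps) 
  qed
  have char: "t2a < tc \<and> G tc = 0"
    if tc: "t1 < tc" "q t1 = (2 * h tc - 2 * h t1) / (tc\<^sup>2 - t1\<^sup>2)"
           "(2 * h tc - 2 * h t1) / (tc\<^sup>2 - t1\<^sup>2) < q tc" for tc
  proof -
    have G: "G tc = 0" using Feq[OF tc(1)] tc(2) by (simp add: A_def)
    have "A < q tc" using tc by (simp add: A_def)
    moreover have "\<not> tc < t2a" using L1[of tc] tc(1) calculation by linarith
    moreover have "tc \<noteq> t2a" using calculation qa by (auto simp: A_def)
    ultimately show ?thesis using G by linarith
  qed
  define t3 where "t3 = t2a + 1"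
  define c where "c = q t3 - A"
  have c: "c > 0" using L2[of t3] by (simp add: c_def t3_def)
  have grow: "G b - G t3 \<ge> (b - t3) * (2 * c)" if tb: "t3 < b" for b
  proof -
    have "\<And>x. t3 \<le> x \<Longrightarrow> x \<le> b \<Longrightarrow> (G has_real_derivative 2 * x * (q x - A)) (at x)"
      by (rule GD) (use t12 t3_def in linarith)
    then obtain z where z: "t3 < z" "z < b" "G b - G t3 = (b - t3) * (2 * z * (q z - A))"
      using MVT2[OF tb, where f=G and f'="\<lambda>x. 2 * x * (q x - A)"] by blast
    have "q z - A \<ge> c" using inc[of t3 z] z t12 by (simp add: c_def t3_def)
    then have "z * (q z - A) \<ge> 1 * c" using c z t12 t3_def
      by (intro mult_mono) auto
    then show ?thesis using z tb by (simp add: mult_left_mono)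
  qed
  define b where "b = t3 + \<bar>G t3\<bar> / (2 * c) + 1"
  have "\<bar>G t3\<bar> / (2 * c) \<ge> 0" using c by simp
  then have b: "t3 < b" by (simp add: b_def)
  have "(b - t3) * (2 * c) = \<bar>G t3\<bar> + 2 * c" using c by (simp add: b_def field_simps)
  then have Gb: "G b > 0" using grow[OF b] c by linarith
  have Ga: "G t2a < 0" using Gneg[of t2a] t12 by simp
  obtain x where x: "t2a \<le> x" "x \<le> b" "G x = 0"
    using IVT'[of G t2a 0 b] Ga Gb b t3_def Gcont[of t2a b] t12 by auto
  have xgt: "t2a < x" using x Ga by (cases "x = t2a") auto
  have ex: "t1 < x \<and> q t1 = (2 * h x - 2 * h t1) / (x\<^sup>2 - t1\<^sup>2) \<and>
            (2 * h x - 2 * h t1) / (x\<^sup>2 - t1\<^sup>2) < q x"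
  proof -
    have "t1 < x" using xgt t12 by simp
    moreover have "q t1 = (2 * h x - 2 * h t1) / (x\<^sup>2 - t1\<^sup>2)"
      using Feq[OF \<open>t1 < x\<close>] x by (simp add: A_def)
    moreover have "A < q x" using L2 xgt by simp
    ultimately show ?thesis by (simp add: A_def)
  qed
  have uniq: "y = z" if "t2a < y" "G y = 0" "t2a < z" "G z = 0" for y z
  proof (rule ccontr)
    assume "y \<noteq> z"
    then consider "y < z" | "z < y" by linarith
    then show False
      by cases (use Ginc[of y z] Ginc[of z y] that in auto)
  qed
  show ?thesis
  proof (intro conjI allI impI)
    show "\<exists>!tc. t1 < tc \<and>
            q t1 = (2 * h tc - 2 * h t1) / (tc\<^sup>2 - t1\<^sup>2) \<and>
            (2 * h tc - 2 * h t1) / (tc\<^sup>2 - t1\<^sup>2) < q tc"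
    proof (rule ex1I[of _ x])
      show "t1 < x \<and> q t1 = (2 * h x - 2 * h t1) / (x\<^sup>2 - t1\<^sup>2) \<and>
            (2 * h x - 2 * h t1) / (x\<^sup>2 - t1\<^sup>2) < q x" by (rule ex)
    next
      fix y assume "t1 < y \<and> q t1 = (2 * h y - 2 * h t1) / (y\<^sup>2 - t1\<^sup>2) \<and>
            (2 * h y - 2 * h t1) / (y\<^sup>2 - t1\<^sup>2) < q y"
      then have "t2a < y \<and> G y = 0" using char by blast
      then show "y = x" using uniq xgt x by blast
    qed
  next
    fix tc assume "t1 < tc \<and> q t1 = (2 * h tc - 2 * h t1) / (tc\<^sup>2 - t1\<^sup>2) \<and>
            (2 * h tc - 2 * h t1) / (tc\<^sup>2 - t1\<^sup>2) < q tc"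
    then have tc: "t2a < tc" "G tc = 0" using char by blast+
    then show "t2a < tc" by simp
    fix t assume t: "t1 < t \<and> t < tc"
    have "G t < 0"
    proof (cases "t \<le> t2a")
      case True then show ?thesis using Gneg t by simp
    next
      case False then show ?thesis using Ginc[of t tc] t tc by simp
    qed
    then show "q t1 > (2 * h t - 2 * h t1) / (t\<^sup>2 - t1\<^sup>2)"
      using Flt t by (simp add: A_def)
  qed
qed

theorem proposition3p1:
  fixes S \<gamma> \<tau>1 \<tau>2 \<tau>2a :: real and h :: "real \<Rightarrow> real"
  assumes gamma: "1 < \<gamma>" "\<gamma> < 2"
    and S: "S > 0"
    and tau12: "1 < \<tau>1" "\<tau>1 < \<tau>2"
    and p'_neg: "\<forall>\<tau>>1. deriv (pres S \<gamma>) \<tau> < 0"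
    and p''_pos1: "\<forall>\<tau>. 1 < \<tau> \<and> \<tau> < \<tau>1 \<longrightarrow> deriv (deriv (pres S \<gamma>)) \<tau> > 0"
    and p''_pos2: "\<forall>\<tau>. \<tau>2 < \<tau> \<longrightarrow> deriv (deriv (pres S \<gamma>)) \<tau> > 0"
    and p''_neg: "\<forall>\<tau>. \<tau>1 < \<tau> \<and> \<tau> < \<tau>2 \<longrightarrow> deriv (deriv (pres S \<gamma>)) \<tau> < 0"
    and h_deriv: "\<forall>\<tau>>1. (h has_real_derivative \<tau> * deriv (pres S \<gamma>) \<tau>) (at \<tau>)"
    and tau2a: "\<tau>2 < \<tau>2a" "deriv (pres S \<gamma>) \<tau>2a = deriv (pres S \<gamma>) \<tau>1"
  shows "(\<exists>!\<tau>c. \<tau>1 < \<tau>c \<and>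
            deriv (pres S \<gamma>) \<tau>1 = (2 * h \<tau>c - 2 * h \<tau>1) / (\<tau>c\<^sup>2 - \<tau>1\<^sup>2) \<and>
            (2 * h \<tau>c - 2 * h \<tau>1) / (\<tau>c\<^sup>2 - \<tau>1\<^sup>2) < deriv (pres S \<gamma>) \<tau>c)
       \<and> (\<forall>\<tau>c. \<tau>1 < \<tau>c \<and>
            deriv (pres S \<gamma>) \<tau>1 = (2 * h \<tau>c - 2 * h \<tau>1) / (\<tau>c\<^sup>2 - \<tau>1\<^sup>2) \<and>
            (2 * h \<tau>c - 2 * h \<tau>1) / (\<tau>c\<^sup>2 - \<tau>1\<^sup>2) < deriv (pres S \<gamma>) \<tau>c
          \<longrightarrow> \<tau>2a < \<tau>c \<and>
              (\<forall>\<tau>. \<tau>1 < \<tau> \<and> \<tau> < \<tau>c \<longrightarrow>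
                 deriv (pres S \<gamma>) \<tau>1 > (2 * h \<tau> - 2 * h \<tau>1) / (\<tau>\<^sup>2 - \<tau>1\<^sup>2)))"
proof -
  show ?thesis
    by (rule main_abs[where q'="deriv (deriv (pres S \<gamma>))"])
       (use tau12 tau2a p''_pos2 p''_neg h_deriv pres_qD in auto)
qed

end
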